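(* Let $l\in\{1,2,3\}$ and $\lambda_0>0$. Let the base stations be the points of a homogeneous Poisson point process in $\mathbb R^l$ with intensity $\lambda_0$, with a mobile station at the origin, all transmission powers and shadow fading factors equal to $1$. For an increasing path-loss function $h$, let $\left(\frac CI\right)_h=\frac{1/h(R_1)}{\sum_{i\ge2}1/h(R_i)}$, where $R_1\le R_2\le\cdots$ are the ordered distances of the base stations from the origin (received power at distance $R$ is $1/h(R)$). Let $h_i(r)=r^{\varepsilon_i}$, $i=1,2$, with $\varepsilon_1>\varepsilon_2>l$, and write $\left(\frac CI\right)_i=\left(\frac CI\right)_{h_i}$. Then $\left(\frac CI\right)_1\ge_{\mathrm{st}}\left(\frac CI\right)_2$.
   Context: The mobile is served by the BS with strongest received power (the nearest one) and all other BSs interfere. For random variables $X,Y$, $X\ge_{\mathrm{st}}Y$ means $\mathbb P(X>x)\ge\mathbb P(Y>x)$ for all real $x$. *)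

theory Defs
  imports "HOL-Probability.Probability"
begin

definition poisson_prob :: "real \<Rightarrow> nat \<Rightarrow> real" where
  "poisson_prob mu k = exp (- mu) * mu ^ k / fact k"

text \<open>A homogeneous Poisson point process of intensity lam on a Euclidean space,
  realised as a random locally finite (simple) set of points Phi omega.\<close>
definition homogeneous_PPP ::
  "'w measure \<Rightarrow> real \<Rightarrow> ('w \<Rightarrow> 'b::euclidean_space set) \<Rightarrow> bool" where
  "homogeneous_PPP M lam Phi \<longleftrightarrow>
     prob_space M \<and>
     (\<forall>\<omega>\<in>space M. \<forall>A. bounded A \<longrightarrow> finite (Phi \<omega> \<inter> A)) \<and>
     (\<forall>A. A \<in> sets lborel \<and> bounded A \<longrightarrow>
        (\<lambda>\<omega>. card (Phi \<omega> \<inter> A)) \<in> measurable M (count_space UNIV) \<and>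
        (\<forall>k. measure M {\<omega>\<in>space M. card (Phi \<omega> \<inter> A) = k}
               = poisson_prob (lam * measure lborel A) k)) \<and>
     (\<forall>(I::nat set) (A::nat \<Rightarrow> 'b set).
        finite I \<and> (\<forall>i\<in>I. A i \<in> sets lborel \<and> bounded (A i)) \<and> disjoint_family_on A I \<longrightarrow>
        prob_space.indep_vars M (\<lambda>_. count_space UNIV) (\<lambda>i \<omega>. card (Phi \<omega> \<inter> A i)) I)"

text \<open>i-th smallest distance (i \<ge> 1, counted with multiplicity) of the points of P
  from the origin: R_1 \<le> R_2 \<le> ...\<close>
definition ordered_dist :: "'b::euclidean_space set \<Rightarrow> nat \<Rightarrow> real" where
  "ordered_dist P i = Inf {r. 0 \<le> r \<and> i \<le> card {x\<in>P. norm x \<le> r}}"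

text \<open>Carrier-to-interference ratio for path-loss function h: the nearest point
  serves, all others interfere; unit powers and shadowing.\<close>
definition CI_ratio :: "(real \<Rightarrow> real) \<Rightarrow> 'b::euclidean_space set \<Rightarrow> real" where
  "CI_ratio h P = (1 / h (ordered_dist P 1)) / (\<Sum>i. 1 / h (ordered_dist P (i + 2)))"

definition st_ge :: "'w measure \<Rightarrow> ('w \<Rightarrow> real) \<Rightarrow> ('w \<Rightarrow> real) \<Rightarrow> bool" where
  "st_ge M X Y \<longleftrightarrow> (\<forall>x::real. measure M {\<omega>\<in>space M. X \<omega> > x} \<ge> measure M {\<omega>\<in>space M. Y \<omega> > x})"

end

theory Submission
  imports Defs
begin


lemma card_mono_r:
  fixes P :: "'b::euclidean_space set"
  assumes fin: "\<forall>A. bounded A \<longrightarrow> finite (P \<inter> A)" and "r \<le> r'"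
  shows "card {x\<in>P. norm x \<le> r} \<le> card {x\<in>P. norm x \<le> r'}"
proof -
  have "{x\<in>P. norm x \<le> r'} = P \<inter> cball 0 r'" by (auto simp: dist_norm)
  then have "finite {x\<in>P. norm x \<le> r'}" using fin by auto
  then show ?thesis by (rule card_mono) (use assms in auto)
qed

lemma od_le:
  fixes P :: "'b::euclidean_space set"
  assumes fin: "\<forall>A. bounded A \<longrightarrow> finite (P \<inter> A)"
    and ne: "\<exists>r. 0 \<le> r \<and> i \<le> card {x\<in>P. norm x \<le> r}"
  shows "ordered_dist P i \<le> a \<longleftrightarrow> (0 \<le> a \<and> i \<le> card {x\<in>P. norm x \<le> a})"
proof -
  define S where "S = {r. 0 \<le> r \<and> i \<le> card {x\<in>P. norm x \<le> r}}"
  have od: "ordered_dist P i = Inf S" by (simp add: ordered_dist_def S_def)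
  have Sne: "S \<noteq> {}" using ne by (auto simp: S_def)
  have bdd: "bdd_below S" by (auto simp: S_def bdd_below_def)
  define m where "m = Inf S"
  have m0: "0 \<le> m" unfolding m_def by (rule cInf_greatest[OF Sne]) (auto simp: S_def)
  define F where "F = {x\<in>P. norm x \<le> m + 1}"
  have "F = P \<inter> cball 0 (m+1)" by (auto simp: F_def dist_norm)
  then have finF: "finite F" using fin by auto
  define D where "D = insert 1 ((\<lambda>x. norm x - m) ` {x\<in>F. norm x > m})"
  define d where "d = Min D"
  have finD: "finite D" using finF by (auto simp: D_def)
  have dpos: "d > 0" unfolding d_def using finD by (subst Min_gr_iff) (auto simp: D_def)
  have dle: "d \<le> 1" unfolding d_def using finD by (auto simp: D_def)
  have gap: "norm x \<ge> m + d" if "x \<in> F" "norm x > m" for x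
  proof -
    have "norm x - m \<in> D" using that by (auto simp: D_def)
    then have "d \<le> norm x - m" unfolding d_def using finD by auto
    then show ?thesis by simp
  qed
  obtain s where s: "s \<in> S" "s < m + d"
    using cInf_lessD[OF Sne, of "m + d"] dpos by (auto simp: m_def)
  have sub: "{x\<in>P. norm x \<le> s} \<subseteq> {x\<in>P. norm x \<le> m}"
  proof
    fix x assume x: "x \<in> {x\<in>P. norm x \<le> s}"
    show "x \<in> {x\<in>P. norm x \<le> m}"
    proof (rule ccontr)
      assume "x \<notin> {x\<in>P. norm x \<le> m}"
      then have "norm x > m" using x by auto
      moreover have "x \<in> F" using x s dle by (auto simp: F_def)
      ultimately have "norm x \<ge> m + d" by (intro gap)
      then show False using x s by auto
    qed
  qed
  have "{x\<in>P. norm x \<le> m} = P \<inter> cball 0 m" by (auto simp: dist_norm)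
  then have "finite {x\<in>P. norm x \<le> m}" using fin by auto
  then have "card {x\<in>P. norm x \<le> s} \<le> card {x\<in>P. norm x \<le> m}" using sub by (rule card_mono)
  then have mS: "m \<in> S" using s m0 by (auto simp: S_def)
  show ?thesis
  proof
    assume "ordered_dist P i \<le> a"
    then have "m \<le> a" by (simp add: od m_def)
    then show "0 \<le> a \<and> i \<le> card {x\<in>P. norm x \<le> a}"
      using mS m0 card_mono_r[OF fin, of m a] by (auto simp: S_def)
  next
    assume "0 \<le> a \<and> i \<le> card {x\<in>P. norm x \<le> a}"
    then have "a \<in> S" by (simp add: S_def)
    then show "ordered_dist P i \<le> a" unfolding od using bdd by (rule cInf_lower)
  qed
qed



lemma od_props:
  fixes P :: "'b::euclidean_space set"
  assumes ne: "\<forall>i. \<exists>r. 0 \<le> r \<and> i \<le> card {x\<in>P. norm x \<le> r}" and "1 \<le> i"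
  shows "0 \<le> ordered_dist P 1" "ordered_dist P 1 \<le> ordered_dist P i"
proof -
  define S where "S = (\<lambda>i. {r. 0 \<le> r \<and> i \<le> card {x\<in>P. norm x \<le> r}})"
  have od: "ordered_dist P i = Inf (S i)" for i by (simp add: ordered_dist_def S_def)
  have Sne: "S i \<noteq> {}" for i using ne by (auto simp: S_def)
  show "0 \<le> ordered_dist P 1" unfolding od by (rule cInf_greatest[OF Sne]) (auto simp: S_def)
  show "ordered_dist P 1 \<le> ordered_dist P i" unfolding od
    by (rule cInf_superset_mono[OF Sne]) (use assms(2) in \<open>auto simp: S_def bdd_below_def\<close>)
qed

lemma CI_form:
  fixes R :: "nat \<Rightarrow> real" and e :: real
  assumes R1: "R 1 > 0" and Ri: "\<And>i. R 1 \<le> R (i+2)" and e: "e > 0"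
    and sT: "summable (\<lambda>i. (R 1 / R (i+2)) powr e)"
  shows "(1 / R 1 powr e) / (\<Sum>i. 1 / R (i+2) powr e) = 1 / (\<Sum>i. (R 1 / R (i+2)) powr e)"
proof -
  define T where "T = (\<lambda>i. (R 1 / R (i+2)) powr e)"
  have Rp: "R (i+2) > 0" for i using R1 Ri[of i] by linarith
  define c where "c = R 1 powr e"
  have c: "c > 0" using R1 by (simp add: c_def)
  have eq: "1 / R (i+2) powr e = T i / c" for i
    using Rp R1 by (simp add: T_def c_def powr_divide)
  have True: "summable T" using sT by (simp add: T_def)
  have "(\<Sum>i. 1 / R (i+2) powr e) = suminf T / c" unfolding eq by (rule suminf_divide[OF True])
  moreover have "1 / R 1 powr e = 1 / c" by (simp add: c_def)
  ultimately show ?thesis using True c by (simp add: T_def)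
qed

lemma CI_mono_pt:
  fixes P :: "'b::euclidean_space set" and e1 e2 :: real
  assumes ne: "\<forall>i. \<exists>r. 0 \<le> r \<and> i \<le> card {x\<in>P. norm x \<le> r}"
    and e: "e1 > e2" "e2 > 0"
    and sm: "summable (\<lambda>i. (ordered_dist P 1 / ordered_dist P (i+2)) powr e2)"
  shows "CI_ratio (\<lambda>r. r powr e2) P \<le> CI_ratio (\<lambda>r. r powr e1) P"
proof -
  define R where "R = ordered_dist P"
  have R10: "0 \<le> R 1" using od_props[OF ne, of 1] by (simp add: R_def)
  have Ri: "R 1 \<le> R (i+2)" for i using od_props[OF ne, of "i+2"] by (simp add: R_def)
  show ?thesis
  proof (cases "R 1 = 0")
    case True
    then show ?thesis by (simp add: CI_ratio_def R_def[symmetric])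
  next
    case False
    then have R1: "R 1 > 0" using R10 by simp
    define T where "T = (\<lambda>e i. (R 1 / R (i+2)) powr e)"
    have Rp: "R (i+2) > 0" for i using R1 Ri[of i] by linarith
    have T0: "0 \<le> T e i" for e i by (simp add: T_def)
    have Tle: "T e1 i \<le> T e2 i" for i
    proof -
      have "R 1 / R (i+2) \<le> 1" "0 < R 1 / R (i+2)" using Rp[of i] Ri[of i] R1 by auto
      then show ?thesis unfolding T_def using e by (intro powr_mono') auto
    qed
    have True: "summable (T e2)" using sm by (simp add: T_def R_def)
    have s1: "summable (T e1)" by (rule summable_comparison_test'[OF True]) (use Tle T0 in auto)
    have CI: "CI_ratio (\<lambda>r. r powr e) P = 1 / suminf (T e)" if "e > 0" "summable (T e)" for e
      unfolding CI_ratio_def R_def[symmetric] T_def using CI_form[OF R1 Ri that(1)] that(2) by (simp add: T_def)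
    have e1p: "e1 > 0" using e by simp
    have le: "suminf (T e1) \<le> suminf (T e2)" by (rule suminf_le[OF Tle s1 True])
    have "T e1 0 > 0" using R1 Rp[of 0] by (simp add: T_def)
    then have pos: "suminf (T e1) > 0" using s1 T0 by (intro suminf_pos2) auto
    have "1 / suminf (T e2) \<le> 1 / suminf (T e1)" using pos le by (simp add: frac_le)
    then show ?thesis using CI[OF e1p s1] CI[OF e(2) True] by simp
  qed
qed



lemma exp_ge_term: fixes x :: real assumes "0 \<le> x" shows "x ^ n / fact n \<le> exp x"
proof -
  obtain t where t: "exp x = (\<Sum>m<Suc n. x ^ m / fact m) + exp t / fact (Suc n) * x ^ Suc n"
    using Maclaurin_exp_le[of x "Suc n"] by blast
  have "x ^ n / fact n \<le> (\<Sum>m<Suc n. x ^ m / fact m)"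
    by (rule member_le_sum) (use assms in auto)
  moreover have "0 \<le> exp t / fact (Suc n) * x ^ Suc n" using assms by simp
  ultimately show ?thesis using t by linarith
qed

lemma poisson_tail:
  assumes "0 < mu"
  shows "1 - (\<Sum>k<m. poisson_prob mu k) \<le> mu ^ m / fact m"
proof -
  obtain t where t: "\<bar>t\<bar> \<le> \<bar>mu\<bar>" "exp mu = (\<Sum>k<m. mu ^ k / fact k) + exp t / fact m * mu ^ m"
    using Maclaurin_exp_le[of mu m] by blast
  have s: "(\<Sum>k<m. poisson_prob mu k) = exp (- mu) * (\<Sum>k<m. mu ^ k / fact k)"
    by (simp add: poisson_prob_def sum_distrib_left)
  have "1 - (\<Sum>k<m. poisson_prob mu k) = exp (-mu) * (exp mu - (\<Sum>k<m. mu ^ k / fact k))"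
    by (simp add: s algebra_simps exp_minus_inverse)
  also have "\<dots> = exp (-mu) * exp t * (mu ^ m / fact m)" using t by simp
  also have "\<dots> \<le> 1 * (mu ^ m / fact m)"
  proof (rule mult_right_mono)
    have "t \<le> mu" using t(1) assms by linarith
    then have "exp (t - mu) \<le> 1" by simp
    then show "exp (-mu) * exp t \<le> 1" by (simp add: exp_add[symmetric])
  qed (use assms in simp)
  finally show ?thesis by simp
qed

lemma poisson_tail2:
  assumes "0 < mu" "2 * exp 1 * mu \<le> real m"
  shows "1 - (\<Sum>k<m. poisson_prob mu k) \<le> (1/2) ^ m"
proof -
  have mpos: "real m > 0" using assms by (smt (verit) exp_gt_zero mult_pos_pos)
  have f: "real m ^ m / fact m \<le> exp (real m)" by (rule exp_ge_term) simp
  have em: "exp (real m) = exp 1 ^ m" using exp_of_nat_mult[of m 1] by simp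
  have "mu ^ m / fact m = (mu / real m) ^ m * (real m ^ m / fact m)"
    using mpos by (simp add: power_divide)
  also have "\<dots> \<le> (mu / real m) ^ m * exp 1 ^ m"
    using f em assms mpos by (intro mult_left_mono) auto
  also have "\<dots> = (exp 1 * mu / real m) ^ m" by (simp add: power_mult_distrib[symmetric] mult_ac)
  also have "\<dots> \<le> (1/2) ^ m"
  proof (rule power_mono)
    show "exp 1 * mu / real m \<le> 1/2" using assms mpos by (simp add: field_simps)
  qed (use assms mpos in simp)
  finally show ?thesis using poisson_tail[OF assms(1), of m] by linarith
qed

lemma poisson_small:
  assumes "0 < mu"
  shows "poisson_prob mu k \<le> (real k + 1) / mu"
proof -
  have e: "mu ^ Suc k / fact (Suc k) \<le> exp mu" by (rule exp_ge_term) (use assms in simp)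
  have "poisson_prob mu k = mu ^ k / fact k / exp mu" by (simp add: poisson_prob_def exp_minus field_simps)
  also have "\<dots> \<le> mu ^ k / fact k / (mu ^ Suc k / fact (Suc k))"
    using e assms by (intro divide_left_mono) auto
  also have "\<dots> = (real k + 1) / mu" using assms by (simp add: field_simps)
  finally show ?thesis .
qed



lemma pow2_bracket:
  fixes r :: real assumes "1 \<le> r" shows "\<exists>k. 2 ^ k \<le> r \<and> r < 2 ^ Suc k"
proof -
  obtain n where n: "r < (2::real) ^ n" using real_arch_pow[of 2 r] by auto
  have "(2::real) ^ n \<le> 2 ^ Suc n" by simp
  then have n': "r < 2 ^ Suc n" using n by linarith
  define k where "k = (LEAST k. r < (2::real) ^ Suc k)"
  have k1: "r < 2 ^ Suc k" unfolding k_def by (rule LeastI[of _ n]) (rule n')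
  have "2 ^ k \<le> r"
  proof (cases k)
    case 0 then show ?thesis using assms by simp
  next
    case (Suc j)
    have "\<not> r < 2 ^ Suc j" using not_less_Least[of j "\<lambda>k. r < (2::real) ^ Suc k"] Suc k_def by auto
    then show ?thesis using Suc by simp
  qed
  then show ?thesis using k1 by blast
qed

lemma summable_ratio:
  fixes P :: "'b::euclidean_space set" and e C :: real and d K :: nat
  assumes fin: "\<forall>A. bounded A \<longrightarrow> finite (P \<inter> A)"
    and ne: "\<forall>i. \<exists>r. 0 \<le> r \<and> i \<le> card {x\<in>P. norm x \<le> r}"
    and d: "1 \<le> d" and e: "e > real d" and C: "C > 0"
    and cnt: "\<forall>k\<ge>K. real (card {x\<in>P. norm x \<le> 2 ^ k}) < C * (2 ^ k) ^ d"
  shows "summable (\<lambda>i. (ordered_dist P 1 / ordered_dist P (i+2)) powr e)"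
proof -
  define Nc where "Nc = (\<lambda>r. card {x\<in>P. norm x \<le> r})"
  define C' where "C' = C * 2 ^ d"
  have C': "C' > 0" using C by (simp add: C'_def)
  have mono: "r \<le> r' \<Longrightarrow> Nc r \<le> Nc r'" for r r' unfolding Nc_def by (rule card_mono_r[OF fin])
  have step1: "real (Nc r) < C' * r ^ d" if r: "2 ^ K \<le> r" for r
  proof -
    have "(1::real) \<le> 2 ^ K" by simp
    then have "1 \<le> r" using r by linarith
    then obtain k where k: "2 ^ k \<le> r" "r < 2 ^ Suc k" using pow2_bracket by blast
    have "(2::real) ^ K < 2 ^ Suc k" using r k by linarith
    then have "K < Suc k" using power_less_imp_less_exp[of "2::real" K "Suc k"] by linarith
    then have "Suc k \<ge> K" by simp
    then have "real (Nc (2 ^ Suc k)) < C * (2 ^ Suc k) ^ d" using cnt unfolding Nc_def by blast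
    also have "\<dots> = C' * (2 ^ k) ^ d" by (simp add: C'_def power_mult_distrib)
    also have "\<dots> \<le> C' * r ^ d" using k C' by (intro mult_left_mono power_mono) auto
    finally have "real (Nc (2 ^ Suc k)) < C' * r ^ d" .
    moreover have "Nc r \<le> Nc (2 ^ Suc k)" using k by (intro mono) simp
    ultimately show ?thesis by linarith
  qed
  define n0 where "n0 = Nc (2 ^ K)"
  define R where "R = ordered_dist P"
  have Rle: "0 \<le> R i \<and> i \<le> Nc (R i)" for i
    using od_le[OF fin, of i "R i"] ne by (simp add: R_def Nc_def)
  have step2: "real i / C' < R i ^ d \<and> 0 < R i" if "n0 < i" for i
  proof -
    have "\<not> R i < 2 ^ K"
    proof
      assume "R i < 2 ^ K"
      then have "Nc (R i) \<le> n0" unfolding n0_def by (intro mono) simp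
      then show False using Rle[of i] that by simp
    qed
    then have big: "2 ^ K \<le> R i" by simp
    have "real i \<le> real (Nc (R i))" using Rle[of i] by simp
    also have "\<dots> < C' * R i ^ d" using step1[OF big] .
    finally have "real i / C' < R i ^ d" using C' by (simp add: field_simps)
    moreover have "(0::real) < 2 ^ K" by simp
    then have "0 < R i" using big by linarith
    ultimately show ?thesis by simp
  qed
  define B where "B = R 1 powr e * C' powr (e / d)"
  have bound: "(R 1 / R (i+2)) powr e \<le> B * real (i+2) powr (- (e / d))" if "n0 < i + 2" for i
  proof -
    let ?n = "real (i+2)"
    have s2: "?n / C' < R (i+2) ^ d" "0 < R (i+2)" using step2[OF that] by auto
    have dpos: "real d > 0" using d by simp
    have R0: "0 \<le> R 1" using Rle[of 1] by simp
    have "R (i+2) powr e = (R (i+2) powr real d) powr (e / d)"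
      using dpos by (simp add: powr_powr)
    also have "\<dots> = (R (i+2) ^ d) powr (e / d)" using s2 by (simp add: powr_realpow)
    also have "\<dots> \<ge> (?n / C') powr (e / d)"
      using s2 e dpos C' by (intro powr_mono2) auto
    finally have lo: "(?n / C') powr (e / d) \<le> R (i+2) powr e" .
    have lo_pos: "0 < (?n / C') powr (e / d)" using C' by simp
    have "(R 1 / R (i+2)) powr e = R 1 powr e / R (i+2) powr e"
      using R0 s2 by (simp add: powr_divide)
    also have "\<dots> \<le> R 1 powr e / (?n / C') powr (e / d)"
      using lo lo_pos s2 by (intro divide_left_mono mult_pos_pos) auto
    also have "\<dots> = B * ?n powr (- (e / d))"
      using C' by (simp add: B_def powr_divide powr_minus_divide)
    finally show ?thesis .
  qed
  have "1 < e / real d" using e d by (simp add: less_divide_eq)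
  then have "summable (\<lambda>n. real n powr (- (e / d)))"
    by (subst summable_real_powr_iff) simp
  then have "summable (\<lambda>i. real (i+2) powr (- (e / d)))"
    using summable_iff_shift[where k=2 and f="\<lambda>n. real n powr (- (e / d))"] by simp
  then have sB: "summable (\<lambda>i. B * real (i+2) powr (- (e / d)))" by (rule summable_mult)
  show ?thesis unfolding R_def[symmetric]
  proof (rule summable_comparison_test'[OF sB])
    fix i assume "n0 \<le> i"
    then show "norm ((R 1 / R (i+2)) powr e) \<le> B * real (i+2) powr (- (e / d))"
      using bound[of i] by simp
  qed
qed



lemma set_cball_eq: "{x\<in>P. norm x \<le> r} = P \<inter> cball (0::'b::euclidean_space) r"
  by (auto simp: dist_norm)

lemma vol_cball:
  assumes "0 \<le> r"
  shows "measure lborel (cball (0::'b::euclidean_space) r) = r ^ DIM('b) * measure lborel (ball (0::'b) 1)"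
  using content_ball_conv_unit_ball[OF assms, of "0::'b"] content_cball_conv_ball[of "0::'b" r] by simp

context
  fixes M :: "'w measure" and lam :: real and Phi :: "'w \<Rightarrow> 'b::euclidean_space set"
  assumes H: "homogeneous_PPP M lam Phi"
begin

interpretation prob_space M using H by (simp add: homogeneous_PPP_def)

lemma ppp_fin: "\<omega> \<in> space M \<Longrightarrow> \<forall>A. bounded A \<longrightarrow> finite (Phi \<omega> \<inter> A)"
  using H by (simp add: homogeneous_PPP_def)

lemma ppp_meas: "(\<lambda>\<omega>. card {x\<in>Phi \<omega>. norm x \<le> r}) \<in> measurable M (count_space UNIV)"
  using H unfolding homogeneous_PPP_def set_cball_eq by auto

lemma ppp_dist: "measure M {\<omega>\<in>space M. card {x\<in>Phi \<omega>. norm x \<le> r} = k}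
   = poisson_prob (lam * measure lborel (cball (0::'b) r)) k"
  using H unfolding homogeneous_PPP_def set_cball_eq by auto

lemma ppp_sets: "{\<omega>\<in>space M. Q (card {x\<in>Phi \<omega>. norm x \<le> r})} \<in> sets M"
proof -
  have "{\<omega>\<in>space M. Q (card {x\<in>Phi \<omega>. norm x \<le> r})}
      = (\<lambda>\<omega>. card {x\<in>Phi \<omega>. norm x \<le> r}) -` {k. Q k} \<inter> space M" by auto
  also have "\<dots> \<in> sets M" by (rule measurable_sets[OF ppp_meas]) simp
  finally show ?thesis .
qed

lemma ppp_sets_eq: "{\<omega>\<in>space M. card {x\<in>Phi \<omega>. norm x \<le> r} = k} \<in> sets M"
  using ppp_sets[of "\<lambda>j. j = k"] by simp

lemma ppp_sets_lt: "{\<omega>\<in>space M. card {x\<in>Phi \<omega>. norm x \<le> r} < k} \<in> sets M"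
  using ppp_sets[of "\<lambda>j. j < k"] by simp

lemma ppp_lt: "measure M {\<omega>\<in>space M. card {x\<in>Phi \<omega>. norm x \<le> r} < m}
   = (\<Sum>k<m. poisson_prob (lam * measure lborel (cball (0::'b) r)) k)"
proof -
  have "{\<omega>\<in>space M. card {x\<in>Phi \<omega>. norm x \<le> r} < m}
      = (\<Union>k\<in>{..<m}. {\<omega>\<in>space M. card {x\<in>Phi \<omega>. norm x \<le> r} = k})" by auto
  also have "measure M \<dots> = (\<Sum>k<m. measure M {\<omega>\<in>space M. card {x\<in>Phi \<omega>. norm x \<le> r} = k})"
    by (rule finite_measure_finite_Union) (auto simp: ppp_sets_eq disjoint_family_on_def)
  finally show ?thesis by (simp add: ppp_dist)
qed

lemma ppp_ge: "measure M {\<omega>\<in>space M. m \<le> card {x\<in>Phi \<omega>. norm x \<le> r}}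
   = 1 - (\<Sum>k<m. poisson_prob (lam * measure lborel (cball (0::'b) r)) k)"
proof -
  have "{\<omega>\<in>space M. m \<le> card {x\<in>Phi \<omega>. norm x \<le> r}}
      = space M - {\<omega>\<in>space M. card {x\<in>Phi \<omega>. norm x \<le> r} < m}" by auto
  then show ?thesis using prob_compl[OF ppp_sets_lt] by (simp add: ppp_lt)
qed

lemma od_meas: "(\<lambda>\<omega>. ordered_dist (Phi \<omega>) i) \<in> borel_measurable M"
  unfolding borel_measurable_iff_le
proof
  fix a :: real
  let ?G = "\<lambda>\<omega>. \<exists>n::nat. i \<le> card {x\<in>Phi \<omega>. norm x \<le> real n}"
  have G: "?G \<omega> \<longleftrightarrow> (\<exists>r. 0 \<le> r \<and> i \<le> card {x\<in>Phi \<omega>. norm x \<le> r})" if "\<omega> \<in> space M" for \<omega>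
  proof
    assume "?G \<omega>" then show "\<exists>r. 0 \<le> r \<and> i \<le> card {x\<in>Phi \<omega>. norm x \<le> r}" by (metis of_nat_0_le_iff)
  next
    assume "\<exists>r. 0 \<le> r \<and> i \<le> card {x\<in>Phi \<omega>. norm x \<le> r}"
    then obtain r where r: "0 \<le> r" "i \<le> card {x\<in>Phi \<omega>. norm x \<le> r}" by blast
    obtain n where n: "r \<le> real n" using real_arch_simple by blast
    have "card {x\<in>Phi \<omega>. norm x \<le> r} \<le> card {x\<in>Phi \<omega>. norm x \<le> real n}"
      by (rule card_mono_r[OF ppp_fin[OF that] n])
    then show "?G \<omega>" using r by (meson order_trans)
  qed
  have empty: "ordered_dist (Phi \<omega>) i = Inf {}" if "\<not> (\<exists>r. 0 \<le> r \<and> i \<le> card {x\<in>Phi \<omega>. norm x \<le> r})" for \<omega>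
    using that unfolding ordered_dist_def by (metis (no_types, lifting) Collect_empty_eq)
  have "{w \<in> space M. ordered_dist (Phi w) i \<le> a}
     = {w\<in>space M. (?G w \<and> (0 \<le> a \<and> i \<le> card {x\<in>Phi w. norm x \<le> a})) \<or> (\<not> ?G w \<and> Inf ({}::real set) \<le> a)}"
  proof (rule Collect_cong)
    fix w
    show "(w \<in> space M \<and> ordered_dist (Phi w) i \<le> a) = (w \<in> space M \<and> ((?G w \<and> (0 \<le> a \<and> i \<le> card {x\<in>Phi w. norm x \<le> a})) \<or> (\<not> ?G w \<and> Inf ({}::real set) \<le> a)))"
    proof (cases "w \<in> space M")
      case True
      show ?thesis
      proof (cases "?G w")
        case g: True
        then show ?thesis using od_le[OF ppp_fin[OF True], of i a] G[OF True] True by simp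
      next
        case g: False
        then show ?thesis using empty[of w] G[OF True] True by simp
      qed
    qed simp
  qed
  also have "\<dots> \<in> sets M"
    by (intro sets.sets_Collect_disj sets.sets_Collect_conj sets.sets_Collect_neg
        sets.sets_Collect_countable_Ex sets.sets_Collect_const ppp_sets)
  finally show "{w \<in> space M. ordered_dist (Phi w) i \<le> a} \<in> sets M" .
qed

lemma CI_meas: "(\<lambda>\<omega>. CI_ratio (\<lambda>r. r powr e) (Phi \<omega>)) \<in> borel_measurable M"
proof -
  note od_meas[measurable]
  show ?thesis unfolding CI_ratio_def by measurable
qed

end



context
  fixes M :: "'w measure" and lam :: real and Phi :: "'w \<Rightarrow> 'b::euclidean_space set"
  assumes H: "homogeneous_PPP M lam Phi" and lam: "lam > 0"
begin

interpretation prob_space M using H by (simp add: homogeneous_PPP_def)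

definition "VV = measure lborel (ball (0::'b) 1)"

lemma VV_pos: "VV > 0" unfolding VV_def by (rule content_ball_pos) simp

lemma mu_eq: "0 \<le> r \<Longrightarrow> lam * measure lborel (cball (0::'b) r) = lam * VV * r ^ DIM('b)"
proof -
  assume r: "0 \<le> r"
  have "measure lborel (cball (0::'b) r) = r ^ DIM('b) * measure lborel (ball (0::'b) 1)"
    by (rule vol_cball) (rule r)
  then show ?thesis by (simp add: VV_def)
qed

lemma AE_inf: "AE \<omega> in M. \<forall>i. \<exists>r. 0 \<le> r \<and> i \<le> card {x\<in>Phi \<omega>. norm x \<le> r}"
proof (subst AE_all_countable, intro allI)
  fix i :: nat
  define A where "A = {\<omega>\<in>space M. \<forall>n::nat. card {x\<in>Phi \<omega>. norm x \<le> real n} < i}"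
  have Asets: "A \<in> sets M" unfolding A_def
    by (intro sets.sets_Collect_countable_All ppp_sets_lt[OF H])
  define c where "c = real i * real i / (lam * VV)"
  have bnd: "measure M A \<le> c / real n" if n: "1 \<le> n" for n :: nat
  proof -
    define mu where "mu = lam * measure lborel (cball (0::'b) (real n))"
    have mu: "mu = lam * VV * real n ^ DIM('b)" unfolding mu_def by (rule mu_eq) simp
    have "real n ^ 1 \<le> real n ^ DIM('b)" using n by (intro power_increasing) auto
    then have mun: "lam * VV * real n \<le> mu" unfolding mu using lam VV_pos by (intro mult_left_mono) auto
    have "0 < lam * VV * real n" using lam VV_pos n by simp
    then have mupos: "0 < mu" using mun by linarith
    have "measure M A \<le> measure M {\<omega>\<in>space M. card {x\<in>Phi \<omega>. norm x \<le> real n} < i}"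
      by (rule finite_measure_mono) (auto simp: A_def ppp_sets_lt[OF H])
    also have "\<dots> = (\<Sum>k<i. poisson_prob mu k)" unfolding mu_def by (rule ppp_lt[OF H])
    also have "\<dots> \<le> (\<Sum>k<i. real i / mu)"
    proof (rule sum_mono)
      fix k assume "k \<in> {..<i}"
      then have "real k + 1 \<le> real i" by simp
      then have "(real k + 1) / mu \<le> real i / mu" using mupos by (simp add: divide_right_mono)
      then show "poisson_prob mu k \<le> real i / mu" using poisson_small[OF mupos, of k] by linarith
    qed
    also have "\<dots> = real i * real i / mu" by simp
    also have "\<dots> \<le> real i * real i / (lam * VV * real n)"
      using mun lam VV_pos n mupos by (intro divide_left_mono mult_pos_pos) auto
    also have "\<dots> = c / real n" by (simp add: c_def)
    finally show ?thesis .
  qed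
  have A0: "measure M A = 0"
  proof (rule ccontr)
    assume "measure M A \<noteq> 0"
    then have pos: "measure M A > 0" using measure_nonneg[of M A] by linarith
    obtain n :: nat where n: "c / measure M A + 1 \<le> real n" using real_arch_simple by blast
    have c0: "c \<ge> 0" using lam VV_pos by (simp add: c_def)
    have "0 \<le> c / measure M A" using c0 pos by simp
    then have "1 \<le> real n" using n by linarith
    then have n1: "1 \<le> n" by simp
    have "c / measure M A < real n" using n by linarith
    then have "c < real n * measure M A" using pos by (simp add: divide_less_eq)
    then have "c / real n < measure M A" using n1 by (simp add: divide_less_eq mult.commute)
    then show False using bnd[OF n1] by linarith
  qed
  have "A \<in> null_sets M" using Asets A0 by (intro null_setsI) (simp add: emeasure_eq_measure)
  moreover have "{\<omega>\<in>space M. \<not> (\<exists>r. 0 \<le> r \<and> i \<le> card {x\<in>Phi \<omega>. norm x \<le> r})} \<subseteq> A"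
    unfolding A_def by (auto simp: not_le) (meson not_le of_nat_0_le_iff)
  ultimately show "AE \<omega> in M. \<exists>r. 0 \<le> r \<and> i \<le> card {x\<in>Phi \<omega>. norm x \<le> r}" by (rule AE_I')
qed

definition "CC = 1 + 2 * exp 1 * lam * VV"

lemma CC_pos: "CC > 0" unfolding CC_def using lam VV_pos by (simp add: add_pos_nonneg)

lemma AE_bnd: "AE \<omega> in M. \<exists>K. \<forall>k\<ge>K. real (card {x\<in>Phi \<omega>. norm x \<le> 2 ^ k}) < CC * (2 ^ k) ^ DIM('b)"
proof -
  define mu where "mu = (\<lambda>k::nat. lam * measure lborel (cball (0::'b) (2 ^ k)))"
  have mu: "mu k = lam * VV * (2 ^ k) ^ DIM('b)" for k unfolding mu_def by (rule mu_eq) simp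
  have mupos: "0 < mu k" for k unfolding mu using lam VV_pos by simp
  define m where "m = (\<lambda>k::nat. k + nat \<lceil>2 * exp 1 * mu k\<rceil>)"
  define B where "B = (\<lambda>k. {\<omega>\<in>space M. m k \<le> card {x\<in>Phi \<omega>. norm x \<le> 2 ^ k}})"
  have Bsets: "B k \<in> sets M" for k unfolding B_def using ppp_sets[OF H, of "\<lambda>j. m k \<le> j"] by simp
  have mge: "2 * exp 1 * mu k \<le> real (m k)" for k
  proof -
    have "2 * exp 1 * mu k \<le> real (nat \<lceil>2 * exp 1 * mu k\<rceil>)" by (rule real_nat_ceiling_ge)
    then show ?thesis by (simp add: m_def)
  qed
  have mk: "k \<le> m k" for k by (simp add: m_def)
  have Bm: "measure M (B k) \<le> (1/2) ^ k" for k
  proof -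
    have "measure M (B k) = 1 - (\<Sum>j<m k. poisson_prob (mu k) j)"
      unfolding B_def mu_def by (rule ppp_ge[OF H])
    also have "\<dots> \<le> (1/2) ^ m k" by (rule poisson_tail2[OF mupos mge])
    also have "\<dots> \<le> (1/2) ^ k" using mk by (intro power_decreasing) auto
    finally show ?thesis .
  qed
  have "summable (\<lambda>k. measure M (B k))"
    by (rule summable_comparison_test'[OF summable_geometric[of "1/2::real"]]) (use Bm in auto)
  then have ev: "AE \<omega> in M. eventually (\<lambda>k. \<omega> \<in> space M - B k) sequentially"
    by (intro borel_cantelli_AE1 Bsets) (auto simp: emeasure_eq_measure)
  have mC: "real (m k) \<le> CC * (2 ^ k) ^ DIM('b)" for k
  proof -
    have "Suc k \<le> 2 ^ k" using less_exp[of k] by linarith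
    then have "real k + 1 \<le> 2 ^ k" by (metis of_nat_Suc of_nat_le_iff of_nat_numeral of_nat_power add.commute)
    also have "(2::real) ^ k = (2 ^ k) ^ 1" by simp
    also have "\<dots> \<le> (2 ^ k) ^ DIM('b)" by (intro power_increasing) auto
    finally have k1: "real k + 1 \<le> (2 ^ k) ^ DIM('b)" .
    have "real (m k) \<le> real k + (2 * exp 1 * mu k + 1)"
    proof -
      have p: "0 \<le> 2 * exp 1 * mu k" using mupos[of k] by simp
      have "real_of_int \<lceil>2 * exp 1 * mu k\<rceil> \<le> 2 * exp 1 * mu k + 1" by (rule of_int_ceiling_le_add_one)
      moreover have "real (nat \<lceil>2 * exp 1 * mu k\<rceil>) = real_of_int \<lceil>2 * exp 1 * mu k\<rceil>"
        using p by (simp add: of_nat_nat)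
      ultimately show ?thesis by (simp add: m_def)
    qed
    also have "\<dots> \<le> CC * (2 ^ k) ^ DIM('b)"
      using k1 unfolding mu CC_def by (simp add: algebra_simps)
    finally show ?thesis .
  qed
  from ev show ?thesis
  proof (eventually_elim)
    case (elim \<omega>)
    then obtain K where K: "\<forall>k\<ge>K. \<omega> \<in> space M - B k" by (auto simp: eventually_sequentially)
    have "real (card {x\<in>Phi \<omega>. norm x \<le> 2 ^ k}) < CC * (2 ^ k) ^ DIM('b)" if "k \<ge> K" for k
    proof -
      have "card {x\<in>Phi \<omega>. norm x \<le> 2 ^ k} < m k" using K that by (auto simp: B_def)
      then have "real (card {x\<in>Phi \<omega>. norm x \<le> 2 ^ k}) < real (m k)" by simp
      then show ?thesis using mC[of k] by linarith
    qed
    then show ?case by blast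
  qed
qed

end



theorem corollary5:
  fixes M :: "'w measure" and Phi :: "'w \<Rightarrow> 'b::euclidean_space set"
    and lam0 eps1 eps2 :: real
  assumes "DIM('b) \<in> {1, 2, 3}"
    and "lam0 > 0"
    and "homogeneous_PPP M lam0 Phi"
    and "eps1 > eps2" and "eps2 > real DIM('b)"
  shows "st_ge M (\<lambda>\<omega>. CI_ratio (\<lambda>r. r powr eps1) (Phi \<omega>))
                 (\<lambda>\<omega>. CI_ratio (\<lambda>r. r powr eps2) (Phi \<omega>))"
proof -
  note H = assms(3) and lam = assms(2)
  interpret prob_space M using H by (simp add: homogeneous_PPP_def)
  have e2: "eps2 > 0" using assms(5) by (smt (verit) of_nat_0_le_iff)
  have "AE \<omega> in M. CI_ratio (\<lambda>r. r powr eps2) (Phi \<omega>) \<le> CI_ratio (\<lambda>r. r powr eps1) (Phi \<omega>)"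
    using AE_inf[OF H lam] AE_bnd[OF H lam] AE_space
  proof eventually_elim
    case (elim \<omega>)
    have fin: "\<forall>A. bounded A \<longrightarrow> finite (Phi \<omega> \<inter> A)" using ppp_fin[OF H elim(3)] .
    obtain K where K: "\<forall>k\<ge>K. real (card {x\<in>Phi \<omega>. norm x \<le> 2 ^ k}) < CC TYPE('b) lam0 * (2 ^ k) ^ DIM('b)"
      using elim(2) by blast
    have sm: "summable (\<lambda>i. (ordered_dist (Phi \<omega>) 1 / ordered_dist (Phi \<omega>) (i+2)) powr eps2)"
      by (rule summable_ratio[OF fin elim(1) _ assms(5) CC_pos[OF H lam] K]) simp
    show ?case by (rule CI_mono_pt[OF elim(1) assms(4) e2 sm])
  qed
  then obtain N where N: "\<And>\<omega>. \<omega> \<in> space M - N \<Longrightarrow>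
      CI_ratio (\<lambda>r. r powr eps2) (Phi \<omega>) \<le> CI_ratio (\<lambda>r. r powr eps1) (Phi \<omega>)"
    and Nnull: "N \<in> null_sets M" by (elim AE_E3) blast
  show ?thesis unfolding st_ge_def
  proof
    fix x :: real
    let ?S1 = "{\<omega>\<in>space M. CI_ratio (\<lambda>r. r powr eps1) (Phi \<omega>) > x}"
    let ?S2 = "{\<omega>\<in>space M. CI_ratio (\<lambda>r. r powr eps2) (Phi \<omega>) > x}"
    have S1: "?S1 \<in> sets M" using CI_meas[OF H, of eps1] unfolding borel_measurable_iff_greater by blast
    have "?S2 \<subseteq> ?S1 \<union> N" using N by fastforce
    then have "measure M ?S2 \<le> measure M (?S1 \<union> N)"
      using S1 Nnull by (intro finite_measure_mono) auto
    also have "\<dots> = measure M ?S1" using S1 Nnull by (rule measure_Un_null_set)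
    finally show "measure M ?S2 \<le> measure M ?S1" .
  qed
qed

end
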